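(* Let $S=\{1,\dots,n\}$ (servers) and $C=\{1,\dots,m\}$ (contents), let $U_s>0$ and integers $d_s\ge 1$ be given for $s\in S$, and let $\lambda_c\ge 0$ be given for $c\in C$. Let $\mathcal{A}$ be the set of binary matrices $A=(a_{sc})\in\{0,1\}^{S\times C}$ with $\sum_{c\in C}a_{sc}\le d_s$ for all $s\in S$. For $A\in\mathcal{A}$, let $\mathcal{B}(A,\Lambda)$ be the set of matrices $B=(b_{sc})_{s\in S,c\in C}$ with nonnegative real entries satisfying $\sum_{c\in C}b_{sc}\le U_s$ for all $s\in S$, $\sum_{s\in S}b_{sc}\le \lambda_c$ for all $c\in C$, and $\mathbb{1}(b_{sc}>0)\le a_{sc}$ for all $(s,c)$. Consider \[ \text{(P1)}\qquad \max_{A\in\mathcal{A}}\ \max_{B\in\mathcal{B}(A,\Lambda)}\ \sum_{s\in S}\sum_{c\in C} b_{sc}, \] and \[ \text{(P2)}\qquad \max_{Z=(z_{sc})}\ \sum_{s\in S}\sum_{c\in C} z_{sc}\quad\text{s.t. } \sum_{c\in C}z_{sc}\le U_s\ \forall s,\ \ \sum_{s\in S}z_{sc}\le\lambda_c\ \forall c,\ \ \sum_{c\in C}\mathbb{1}(z_{sc}>0)\le d_s\ \forall s,\ \ z_{sc}\in\mathbb{R}_+ . \] Then problems (P1) and (P2) are equivalent (in particular, they have the same optimal value). Furthermore, if $Z^*=(z^*_{sc})$ is an optimal solution of (P2), then the matrix $A^*$ defined by $a^*_{sc}=\mathbb{1}(z^*_{sc}>0)$ for all $(s,c)\in S\times C$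 is an optimal solution (optimal allocation) of (P1).
   Context: $\mathbb{1}(\cdot)$ denotes the indicator function. $\Lambda=(\lambda_c)_{c\in C}$ is the vector of content popularities (arrival rates). $a_{sc}=1$ means content $c$ is stored in the cache of server $s$; $b_{sc}$ is the amount of requests of content $c$ matched to server $s$. *)

theory Defs
  imports Complex_Main
begin

text \<open>Servers S = {1..n}, contents C = {1..m}. Matrices are functions
  nat \<Rightarrow> nat \<Rightarrow> _ ; only the entries with (s,c) in S x C matter.\<close>

definition total :: "nat \<Rightarrow> nat \<Rightarrow> (nat \<Rightarrow> nat \<Rightarrow> real) \<Rightarrow> real" where
  "total n m b = (\<Sum>s\<in>{1..n}. \<Sum>c\<in>{1..m}. b s c)"

definition alloc :: "nat \<Rightarrow> nat \<Rightarrow> (nat \<Rightarrow> nat) \<Rightarrow> (nat \<Rightarrow> nat \<Rightarrow> nat) set" where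
  "alloc n m d = {a. (\<forall>s\<in>{1..n}. \<forall>c\<in>{1..m}. a s c \<in> {0,1}) \<and>
                     (\<forall>s\<in>{1..n}. (\<Sum>c\<in>{1..m}. a s c) \<le> d s)}"

definition matchings :: "nat \<Rightarrow> nat \<Rightarrow> (nat \<Rightarrow> real) \<Rightarrow> (nat \<Rightarrow> real) \<Rightarrow>
    (nat \<Rightarrow> nat \<Rightarrow> nat) \<Rightarrow> (nat \<Rightarrow> nat \<Rightarrow> real) set" where
  "matchings n m U lam a = {b.
     (\<forall>s\<in>{1..n}. \<forall>c\<in>{1..m}. b s c \<ge> 0) \<and>
     (\<forall>s\<in>{1..n}. (\<Sum>c\<in>{1..m}. b s c) \<le> U s) \<and>
     (\<forall>c\<in>{1..m}. (\<Sum>s\<in>{1..n}. b s c) \<le> lam c) \<and>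
     (\<forall>s\<in>{1..n}. \<forall>c\<in>{1..m}. (of_bool (b s c > 0) :: nat) \<le> a s c)}"

definition P2_feasible :: "nat \<Rightarrow> nat \<Rightarrow> (nat \<Rightarrow> real) \<Rightarrow> (nat \<Rightarrow> nat) \<Rightarrow> (nat \<Rightarrow> real) \<Rightarrow>
    (nat \<Rightarrow> nat \<Rightarrow> real) set" where
  "P2_feasible n m U d lam = {z.
     (\<forall>s\<in>{1..n}. \<forall>c\<in>{1..m}. z s c \<ge> 0) \<and>
     (\<forall>s\<in>{1..n}. (\<Sum>c\<in>{1..m}. z s c) \<le> U s) \<and>
     (\<forall>c\<in>{1..m}. (\<Sum>s\<in>{1..n}. z s c) \<le> lam c) \<and>
     (\<forall>s\<in>{1..n}. (\<Sum>c\<in>{1..m}. (of_bool (z s c > 0) :: nat)) \<le> d s)}"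

definition P1_opt_value :: "nat \<Rightarrow> nat \<Rightarrow> (nat \<Rightarrow> real) \<Rightarrow> (nat \<Rightarrow> nat) \<Rightarrow> (nat \<Rightarrow> real) \<Rightarrow> real \<Rightarrow> bool" where
  "P1_opt_value n m U d lam v \<longleftrightarrow>
     (\<exists>a\<in>alloc n m d. \<exists>b\<in>matchings n m U lam a. total n m b = v) \<and>
     (\<forall>a\<in>alloc n m d. \<forall>b\<in>matchings n m U lam a. total n m b \<le> v)"

definition P2_opt_value :: "nat \<Rightarrow> nat \<Rightarrow> (nat \<Rightarrow> real) \<Rightarrow> (nat \<Rightarrow> nat) \<Rightarrow> (nat \<Rightarrow> real) \<Rightarrow> real \<Rightarrow> bool" where
  "P2_opt_value n m U d lam v \<longleftrightarrow>
     (\<exists>z\<in>P2_feasible n m U d lam. total n m z = v) \<and>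
     (\<forall>z\<in>P2_feasible n m U d lam. total n m z \<le> v)"

definition P2_optimal :: "nat \<Rightarrow> nat \<Rightarrow> (nat \<Rightarrow> real) \<Rightarrow> (nat \<Rightarrow> nat) \<Rightarrow> (nat \<Rightarrow> real) \<Rightarrow>
    (nat \<Rightarrow> nat \<Rightarrow> real) \<Rightarrow> bool" where
  "P2_optimal n m U d lam z \<longleftrightarrow> z \<in> P2_feasible n m U d lam \<and>
     (\<forall>z'\<in>P2_feasible n m U d lam. total n m z' \<le> total n m z)"

definition P1_optimal_alloc :: "nat \<Rightarrow> nat \<Rightarrow> (nat \<Rightarrow> real) \<Rightarrow> (nat \<Rightarrow> nat) \<Rightarrow> (nat \<Rightarrow> real) \<Rightarrow>
    (nat \<Rightarrow> nat \<Rightarrow> nat) \<Rightarrow> bool" where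
  "P1_optimal_alloc n m U d lam a \<longleftrightarrow> a \<in> alloc n m d \<and>
     (\<exists>b\<in>matchings n m U lam a. \<forall>a'\<in>alloc n m d. \<forall>b'\<in>matchings n m U lam a'.
         total n m b' \<le> total n m b)"

end

theory Submission
  imports Defs "HOL-Analysis.Analysis"
begin

lemma cont_coord: "continuous_on UNIV (\<lambda>z::nat \<Rightarrow> nat \<Rightarrow> real. z s c)"
  by (rule continuous_on_product_then_coordinatewise[OF continuous_on_product_coordinates])

lemma cont_total: "continuous_on UNIV (\<lambda>z::nat \<Rightarrow> nat \<Rightarrow> real. \<Sum>s\<in>A. \<Sum>c\<in>B. z s c)"
  by (intro continuous_on_sum cont_coord)

lemma cont_rowsum: "continuous_on UNIV (\<lambda>z::nat \<Rightarrow> nat \<Rightarrow> real. \<Sum>c\<in>B. z s c)"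
  by (intro continuous_on_sum cont_coord)

lemma cont_colsum: "continuous_on UNIV (\<lambda>z::nat \<Rightarrow> nat \<Rightarrow> real. \<Sum>s\<in>B. z s c)"
  by (intro continuous_on_sum cont_coord)

lemma compact_PiE_UNIV:
  assumes "\<And>i. compact (S i)"
  shows "compact (PiE UNIV S :: ('a \<Rightarrow> 'b::topological_space) set)"
proof -
  have "compactin (product_topology (\<lambda>i. euclidean) UNIV) (PiE UNIV S)"
    using assms by (subst compactin_PiE) auto
  then show ?thesis by (simp add: euclidean_product_topology)
qed

lemma count_iff:
  fixes z :: "nat \<Rightarrow> nat \<Rightarrow> real"
  shows "((\<Sum>c\<in>{1..m}. (of_bool (z s c > 0) :: nat)) \<le> k) \<longleftrightarrow>
     (\<forall>P. P \<subseteq> {1..m} \<and> k < card P \<longrightarrow> (\<exists>c\<in>P. z s c \<le> 0))"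
proof -
  have eq: "(\<Sum>c\<in>{1..m}. (of_bool (z s c > 0) :: nat)) = card {c\<in>{1..m}. z s c > 0}"
    by (simp add: sum_of_bool_eq Int_def conj_commute)
  show ?thesis
  proof
    assume h: "(\<Sum>c\<in>{1..m}. (of_bool (z s c > 0) :: nat)) \<le> k"
    show "\<forall>P. P \<subseteq> {1..m} \<and> k < card P \<longrightarrow> (\<exists>c\<in>P. z s c \<le> 0)"
    proof (intro allI impI)
      fix P assume P: "P \<subseteq> {1..m} \<and> k < card P"
      show "\<exists>c\<in>P. z s c \<le> 0"
      proof (rule ccontr)
        assume "\<not> ?thesis"
        then have "P \<subseteq> {c\<in>{1..m}. z s c > 0}" using P by force
        then have "card P \<le> card {c\<in>{1..m}. z s c > 0}" by (intro card_mono) auto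
        then show False using h eq P by linarith
      qed
    qed
  next
    assume h: "\<forall>P. P \<subseteq> {1..m} \<and> k < card P \<longrightarrow> (\<exists>c\<in>P. z s c \<le> 0)"
    show "(\<Sum>c\<in>{1..m}. (of_bool (z s c > 0) :: nat)) \<le> k"
    proof (rule ccontr)
      assume "\<not> ?thesis"
      then have "k < card {c\<in>{1..m}. z s c > 0}" using eq by linarith
      then show False using h[rule_format, of "{c\<in>{1..m}. z s c > 0}"] by force
    qed
  qed
qed

lemma key1:
  assumes "a \<in> alloc n m d" "b \<in> matchings n m U lam a"
  shows "b \<in> P2_feasible n m U d lam"
proof -
  have "\<forall>s\<in>{1..n}. (\<Sum>c\<in>{1..m}. (of_bool (b s c > 0) :: nat)) \<le> d s"
  proof
    fix s assume s: "s \<in> {1..n}"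
    have "(\<Sum>c\<in>{1..m}. (of_bool (b s c > 0) :: nat)) \<le> (\<Sum>c\<in>{1..m}. a s c)"
      using assms(2) s by (intro sum_mono) (auto simp: matchings_def)
    also have "\<dots> \<le> d s" using assms(1) s by (auto simp: alloc_def)
    finally show "(\<Sum>c\<in>{1..m}. (of_bool (b s c > 0) :: nat)) \<le> d s" .
  qed
  then show ?thesis using assms(2) by (auto simp: matchings_def P2_feasible_def)
qed

lemma key2:
  assumes "z \<in> P2_feasible n m U d lam"
  shows "(\<lambda>s c. if z s c > 0 then 1 else 0) \<in> alloc n m d \<and>
         z \<in> matchings n m U lam (\<lambda>s c. if z s c > 0 then 1 else 0)"
proof -
  have "\<forall>s\<in>{1..n}. (\<Sum>c\<in>{1..m}. (if z s c > 0 then 1 else 0 :: nat)) \<le> d s"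
    using assms by (simp add: P2_feasible_def of_bool_def)
  then show ?thesis using assms by (auto simp: P2_feasible_def alloc_def matchings_def)
qed

lemma exists_max:
  assumes U: "\<forall>s\<in>{1..n}. U s > 0" and lam: "\<forall>c\<in>{1..m}. lam c \<ge> 0"
  shows "\<exists>z\<in>P2_feasible n m U d lam. \<forall>z'\<in>P2_feasible n m U d lam. total n m z' \<le> total n m z"
proof -
  define Box :: "(nat \<Rightarrow> nat \<Rightarrow> real) set" where
    "Box = PiE UNIV (\<lambda>s. PiE UNIV (\<lambda>c. if s \<in> {1..n} \<and> c \<in> {1..m} then {0..U s} else {0}))"
  define C1 :: "(nat \<Rightarrow> nat \<Rightarrow> real) set" where
    "C1 = (\<Inter>s\<in>{1..n}. {z. (\<Sum>c\<in>{1..m}. z s c) \<le> U s})"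
  define C2 :: "(nat \<Rightarrow> nat \<Rightarrow> real) set" where
    "C2 = (\<Inter>c\<in>{1..m}. {z. (\<Sum>s\<in>{1..n}. z s c) \<le> lam c})"
  define C3 :: "(nat \<Rightarrow> nat \<Rightarrow> real) set" where
    "C3 = (\<Inter>s\<in>{1..n}. \<Inter>P\<in>{P. P \<subseteq> {1..m} \<and> d s < card P}. \<Union>c\<in>P. {z. z s c \<le> 0})"
  define F where "F = Box \<inter> (C1 \<inter> C2 \<inter> C3)"
  have cB: "compact Box" unfolding Box_def
    by (intro compact_PiE_UNIV) auto
  have cl1: "closed C1" unfolding C1_def
    by (intro closed_INT ballI closed_Collect_le cont_rowsum continuous_on_const)
  have cl2: "closed C2" unfolding C2_def
    by (intro closed_INT ballI closed_Collect_le cont_colsum continuous_on_const)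
  have fin: "finite {P. P \<subseteq> {1..m::nat} \<and> k < card P}" for k :: nat
    by (rule finite_subset[of _ "Pow {1..m}"]) auto
  have cl3: "closed C3" unfolding C3_def
    apply (intro closed_INT closed_UN ballI)
    subgoal by (auto intro: finite_subset)
    by (auto intro!: closed_Collect_le cont_coord continuous_on_const)
  have cF: "compact F" unfolding F_def using cB cl1 cl2 cl3 by (intro compact_Int_closed) auto
  have sub: "F \<subseteq> P2_feasible n m U d lam"
  proof
    fix z assume "z \<in> F"
    then have zB: "z \<in> Box" and z1: "z \<in> C1" and z2: "z \<in> C2" and z3: "z \<in> C3"
      by (auto simp: F_def)
    have "\<forall>s\<in>{1..n}. \<forall>c\<in>{1..m}. z s c \<ge> 0"
    proof (intro ballI)
      fix s c assume "s \<in> {1..n}" "c \<in> {1..m}"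
      moreover have "z s c \<in> (if s \<in> {1..n} \<and> c \<in> {1..m} then {0..U s} else {0})"
        using zB by (auto simp: Box_def PiE_iff)
      ultimately show "z s c \<ge> 0" by simp
    qed
    moreover have "\<forall>s\<in>{1..n}. (\<Sum>c\<in>{1..m}. (of_bool (z s c > 0) :: nat)) \<le> d s"
      using z3 unfolding C3_def count_iff by auto
    ultimately show "z \<in> P2_feasible n m U d lam"
      using z1 z2 by (auto simp: P2_feasible_def C1_def C2_def)
  qed
  have restr: "(\<lambda>s c. if s \<in> {1..n} \<and> c \<in> {1..m} then z s c else 0) \<in> F \<and>
     total n m (\<lambda>s c. if s \<in> {1..n} \<and> c \<in> {1..m} then z s c else 0) = total n m z"
    if z: "z \<in> P2_feasible n m U d lam" for z
  proof -
    let ?r = "\<lambda>s c. if s \<in> {1..n} \<and> c \<in> {1..m} then z s c else (0::real)"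
    have nn: "\<forall>s\<in>{1..n}. \<forall>c\<in>{1..m}. z s c \<ge> 0"
      and rs: "\<forall>s\<in>{1..n}. (\<Sum>c\<in>{1..m}. z s c) \<le> U s"
      and cs: "\<forall>c\<in>{1..m}. (\<Sum>s\<in>{1..n}. z s c) \<le> lam c"
      and ct: "\<forall>s\<in>{1..n}. (\<Sum>c\<in>{1..m}. (of_bool (z s c > 0) :: nat)) \<le> d s"
      using z by (auto simp: P2_feasible_def)
    have le: "z s c \<le> U s" if "s \<in> {1..n}" "c \<in> {1..m}" for s c
    proof -
      have "z s c \<le> (\<Sum>c\<in>{1..m}. z s c)"
        using that nn by (intro member_le_sum) auto
      then show ?thesis using rs that by force
    qed
    have "?r \<in> Box" unfolding Box_def using nn le by (auto simp: PiE_iff)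
    moreover have "?r \<in> C1" unfolding C1_def using rs by auto
    moreover have "?r \<in> C2" unfolding C2_def using cs by auto
    moreover have "?r \<in> C3"
    proof -
      have "\<forall>s\<in>{1..n}. \<forall>P. P \<subseteq> {1..m} \<and> d s < card P \<longrightarrow> (\<exists>c\<in>P. z s c \<le> 0)"
        using ct count_iff by blast
      then show ?thesis unfolding C3_def by (auto simp: subset_iff)
    qed
    moreover have "total n m ?r = total n m z" unfolding total_def
      by (intro sum.cong refl) auto
    ultimately show ?thesis by (simp add: F_def)
  qed
  have "(\<lambda>s c. 0) \<in> P2_feasible n m U d lam"
    using U lam by (auto simp: P2_feasible_def less_imp_le)
  then have ne: "F \<noteq> {}" using restr by blast
  have "continuous_on F (total n m)" unfolding total_def
    using cont_total continuous_on_subset by blast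
  then obtain z0 where z0: "z0 \<in> F" "\<forall>y\<in>F. total n m y \<le> total n m z0"
    using continuous_attains_sup[OF cF ne] by blast
  show ?thesis
  proof (intro bexI ballI)
    show "z0 \<in> P2_feasible n m U d lam" using z0 sub by blast
    fix z' assume "z' \<in> P2_feasible n m U d lam"
    then have "(\<lambda>s c. if s \<in> {1..n} \<and> c \<in> {1..m} then z' s c else 0) \<in> F \<and>
     total n m (\<lambda>s c. if s \<in> {1..n} \<and> c \<in> {1..m} then z' s c else 0) = total n m z'"
      by (rule restr)
    then show "total n m z' \<le> total n m z0" using z0(2) by force
  qed
qed

theorem proposition1:
  fixes n m :: nat and U :: "nat \<Rightarrow> real" and d :: "nat \<Rightarrow> nat" and lam :: "nat \<Rightarrow> real"
  assumes "\<forall>s\<in>{1..n}. U s > 0"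
    and "\<forall>s\<in>{1..n}. d s \<ge> 1"
    and "\<forall>c\<in>{1..m}. lam c \<ge> 0"
  shows "(\<exists>v. P1_opt_value n m U d lam v) \<and>
         (\<forall>v. P1_opt_value n m U d lam v \<longleftrightarrow> P2_opt_value n m U d lam v) \<and>
         (\<forall>z. P2_optimal n m U d lam z \<longrightarrow>
              P1_optimal_alloc n m U d lam (\<lambda>s c. if z s c > 0 then 1 else 0))"
proof (intro conjI allI impI)
  have eqv: "P1_opt_value n m U d lam v \<longleftrightarrow> P2_opt_value n m U d lam v" for v
  proof
    assume h: "P1_opt_value n m U d lam v"
    then obtain a b where ab: "a \<in> alloc n m d" "b \<in> matchings n m U lam a" "total n m b = v"
      unfolding P1_opt_value_def by blast
    have "b \<in> P2_feasible n m U d lam" using key1[OF ab(1,2)] .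
    moreover have "\<forall>z\<in>P2_feasible n m U d lam. total n m z \<le> v"
      using h key2 unfolding P1_opt_value_def by blast
    ultimately show "P2_opt_value n m U d lam v" unfolding P2_opt_value_def using ab(3) by blast
  next
    assume h: "P2_opt_value n m U d lam v"
    then obtain z where z: "z \<in> P2_feasible n m U d lam" "total n m z = v"
      unfolding P2_opt_value_def by blast
    have "\<forall>a\<in>alloc n m d. \<forall>b\<in>matchings n m U lam a. total n m b \<le> v"
      using h key1 unfolding P2_opt_value_def by blast
    then show "P1_opt_value n m U d lam v" unfolding P1_opt_value_def using key2[OF z(1)] z(2) by blast
  qed
  then show "P1_opt_value n m U d lam v \<longleftrightarrow> P2_opt_value n m U d lam v" for v .
  obtain z where "z\<in>P2_feasible n m U d lam"
    "\<forall>z'\<in>P2_feasible n m U d lam. total n m z' \<le> total n m z"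
    using exists_max assms(1,3) by blast
  then have "P2_opt_value n m U d lam (total n m z)" unfolding P2_opt_value_def by blast
  then show "\<exists>v. P1_opt_value n m U d lam v" using eqv by blast
next
  fix z assume "P2_optimal n m U d lam z"
  then show "P1_optimal_alloc n m U d lam (\<lambda>s c. if z s c > 0 then 1 else 0)"
    unfolding P2_optimal_def P1_optimal_alloc_def using key1 key2[of z] by blast
qed

end
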